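(* Let $w(x)=a\times x+b\in\mathcal{R}$. If $w\not\equiv0$, then $a\neq0$, $a\cdot b=0$, and $\Gamma$ is axially symmetric around the line parallel to $a$ passing through the point $b_a:=|a|^{-2}(a\times b)$. Conversely, if $\Gamma$ is axially symmetric around the line parallel to some $a\neq0$ and passing through some $\tilde b\in\mathbb{R}^3$, then $\tilde w(x)=a\times(x-\tilde b)$ belongs to $\mathcal{R}\setminus\{0\}$.
   Context: $\Gamma\subset\mathbb{R}^3$ is a two-dimensional closed (compact, without boundary), connected, oriented surface of class $C^2$ with unit outward normal $n$. $\mathcal{R}=\{w(x)=a\times x+b,\ x\in\mathbb{R}^3: a,b\in\mathbb{R}^3,\ w|_\Gamma\cdot n=0\text{ on }\Gamma\}$. A set is axially symmetric around a line if it is invariant under rotations by every angle around that line. *)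

theory Defs
  imports "HOL-Analysis.Analysis"
begin

text \<open>A closed (compact, boundaryless), connected, oriented C^2 surface Gamma in R^3
  together with its unit outward normal field nrm.\<close>
definition closed_C2_surface :: "(real^3) set \<Rightarrow> (real^3 \<Rightarrow> real^3) \<Rightarrow> bool" where
  "closed_C2_surface \<Gamma> nrm \<longleftrightarrow>
     \<Gamma> \<noteq> {} \<and> compact \<Gamma> \<and> connected \<Gamma> \<and>
     (\<exists>\<Omega>. open \<Omega> \<and> bounded \<Omega> \<and> frontier \<Omega> = \<Gamma> \<and>
       (\<forall>p\<in>\<Gamma>. \<exists>U (\<phi>::real^3 \<Rightarrow> real) \<phi>' \<phi>''.
          open U \<and> p \<in> U \<and>
          (\<forall>x\<in>U. (\<phi> has_derivative (\<lambda>h. \<phi>' x \<bullet> h)) (at x)) \<and>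
          (\<forall>x\<in>U. (\<phi>' has_derivative \<phi>'' x) (at x)) \<and>
          (\<forall>h. continuous_on U (\<lambda>x. \<phi>'' x h)) \<and>
          (\<forall>x\<in>U. \<phi>' x \<noteq> 0) \<and>
          \<Gamma> \<inter> U = {x\<in>U. \<phi> x = 0} \<and>
          \<Omega> \<inter> U = {x\<in>U. \<phi> x < 0} \<and>
          (\<forall>x\<in>\<Gamma> \<inter> U. nrm x = (1 / norm (\<phi>' x)) *\<^sub>R \<phi>' x)))"

definition rigid_tangent :: "(real^3) set \<Rightarrow> (real^3 \<Rightarrow> real^3) \<Rightarrow> (real^3 \<Rightarrow> real^3) set" where
  "rigid_tangent \<Gamma> nrm =
     {w. (\<exists>a b. w = (\<lambda>x. cross3 a x + b)) \<and> (\<forall>x\<in>\<Gamma>. w x \<bullet> nrm x = 0)}"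

text \<open>Rotation of v by angle theta about the unit axis u (Rodrigues' formula).\<close>
definition rot_axis :: "real^3 \<Rightarrow> real \<Rightarrow> real^3 \<Rightarrow> real^3" where
  "rot_axis u \<theta> v = cos \<theta> *\<^sub>R v + sin \<theta> *\<^sub>R cross3 u v + ((1 - cos \<theta>) * (u \<bullet> v)) *\<^sub>R u"

definition axially_symmetric :: "(real^3) set \<Rightarrow> real^3 \<Rightarrow> real^3 \<Rightarrow> bool" where
  "axially_symmetric S a c \<longleftrightarrow>
     (\<forall>\<theta>. (\<lambda>x. c + rot_axis ((1 / norm a) *\<^sub>R a) \<theta> (x - c)) ` S = S)"

end

theory Submission
  imports Defs
begin


lemma gronwall_fwd:
  fixes \<psi> \<psi>' :: "real \<Rightarrow> real"
  assumes d: "\<And>t. 0 \<le> t \<Longrightarrow> t \<le> T \<Longrightarrow> (\<psi> has_real_derivative \<psi>' t) (at t)"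
    and b: "\<And>t. 0 \<le> t \<Longrightarrow> t \<le> T \<Longrightarrow> \<bar>\<psi>' t\<bar> \<le> K * \<bar>\<psi> t\<bar>"
    and z: "\<psi> 0 = 0" and T: "0 \<le> T"
  shows "\<psi> T = 0"
proof -
  let ?E = "\<lambda>t. (\<psi> t)\<^sup>2 * exp (- (2 * K * t))"
  have "?E T \<le> ?E 0"
  proof (rule DERIV_nonpos_imp_nonincreasing[OF T])
    fix x assume x: "0 \<le> x" "x \<le> T"
    have D: "(?E has_real_derivative (2 * \<psi> x * \<psi>' x) * exp (- (2 * K * x)) + (\<psi> x)\<^sup>2 * (exp (- (2 * K * x)) * (- (2 * K)))) (at x)"
      by (rule derivative_eq_intros d[OF x] refl | simp)+
    have "\<psi> x * \<psi>' x \<le> K * (\<psi> x)\<^sup>2"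
    proof -
      have "\<psi> x * \<psi>' x \<le> \<bar>\<psi> x\<bar> * \<bar>\<psi>' x\<bar>" by (simp add: abs_mult[symmetric])
      also have "\<dots> \<le> \<bar>\<psi> x\<bar> * (K * \<bar>\<psi> x\<bar>)" by (rule mult_left_mono[OF b[OF x]]) simp
      also have "\<dots> = K * (\<psi> x)\<^sup>2" by (simp add: power2_eq_square)
      finally show ?thesis .
    qed
    then have "(2 * \<psi> x * \<psi>' x) * exp (- (2 * K * x)) + (\<psi> x)\<^sup>2 * (exp (- (2 * K * x)) * (- (2 * K))) \<le> 0"
      by (simp add: algebra_simps mult_right_mono)
    then show "\<exists>y. (?E has_real_derivative y) (at x) \<and> y \<le> 0" using D by blast
  qed
  then have "(\<psi> T)\<^sup>2 * exp (- (2 * K * T)) \<le> 0" using z by simp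
  then have "(\<psi> T)\<^sup>2 \<le> 0" by (simp add: mult_le_0_iff)
  then show ?thesis by simp
qed

lemma gronwall:
  fixes \<psi> \<psi>' :: "real \<Rightarrow> real"
  assumes d: "\<And>t. \<bar>t\<bar> < \<delta> \<Longrightarrow> (\<psi> has_real_derivative \<psi>' t) (at t)"
    and b: "\<And>t. \<bar>t\<bar> < \<delta> \<Longrightarrow> \<bar>\<psi>' t\<bar> \<le> K * \<bar>\<psi> t\<bar>"
    and z: "\<psi> 0 = 0" and t: "\<bar>t\<bar> < \<delta>"
  shows "\<psi> t = 0"
proof (cases "0 \<le> t")
  case True
  show ?thesis
    by (rule gronwall_fwd[where \<psi>'=\<psi>' and K=K]) (use d b z t True in auto)
next
  case False
  have "(\<lambda>s. \<psi> (- s)) (-t) = 0"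
  proof (rule gronwall_fwd[where \<psi>="\<lambda>s. \<psi> (- s)" and \<psi>'="\<lambda>s. - \<psi>' (-s)" and K=K and T="-t"])
    fix s :: real assume s: "0 \<le> s" "s \<le> - t"
    then have sd: "\<bar>-s\<bar> < \<delta>" using t by auto
    have "((\<lambda>s. \<psi> (- s)) has_real_derivative \<psi>' (- s) * (-1)) (at s)"
      by (rule DERIV_chain2[where g=uminus, OF d[OF sd]]) (auto intro!: derivative_eq_intros)
    then show "((\<lambda>s. \<psi> (- s)) has_real_derivative - \<psi>' (- s)) (at s)" by simp
    show "\<bar>- \<psi>' (- s)\<bar> \<le> K * \<bar>\<psi> (- s)\<bar>" using b[OF \<open>\<bar>-s\<bar> < \<delta>\<close>] by simp
  qed (use z False in auto)
  then show ?thesis by simp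
qed



lemma cross_cross_same: "cross3 u (cross3 u v) = (u \<bullet> v) *\<^sub>R u - (u \<bullet> u) *\<^sub>R v"
  by (simp add: cross3_simps forall_3)

lemma rot0: "rot_axis u 0 v = v"
  by (simp add: rot_axis_def)

lemma rot_inner: "u \<bullet> u = 1 \<Longrightarrow> u \<bullet> rot_axis u \<theta> v = u \<bullet> v"
  by (simp add: rot_axis_def inner_add_right dot_cross_self algebra_simps)

lemma rot_add_vec: "rot_axis u \<theta> (v + w) = rot_axis u \<theta> v + rot_axis u \<theta> w"
  by (simp add: rot_axis_def cross_add_right inner_add_right algebra_simps)

lemma rot_diff_vec: "rot_axis u \<theta> (v - w) = rot_axis u \<theta> v - rot_axis u \<theta> w"
  by (metis rot_add_vec diff_add_cancel add_diff_cancel)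

lemma rot_axis_fix: "u \<bullet> u = 1 \<Longrightarrow> rot_axis u \<theta> (c *\<^sub>R u) = c *\<^sub>R u"
  by (simp add: rot_axis_def cross_mult_right algebra_simps)

lemma cross_rot: "u \<bullet> u = 1 \<Longrightarrow> cross3 u (rot_axis u \<theta> v) = cos \<theta> *\<^sub>R cross3 u v + sin \<theta> *\<^sub>R ((u \<bullet> v) *\<^sub>R u - v)"
  by (simp add: rot_axis_def cross_add_right cross_mult_right cross_cross_same)

lemma rot_comp: assumes "u \<bullet> u = 1"
  shows "rot_axis u (\<alpha> + \<beta>) v = rot_axis u \<alpha> (rot_axis u \<beta> v)"
proof -
  have "rot_axis u \<alpha> (rot_axis u \<beta> v) = cos \<alpha> *\<^sub>R rot_axis u \<beta> v + sin \<alpha> *\<^sub>R cross3 u (rot_axis u \<beta> v) + ((1 - cos \<alpha>) * (u \<bullet> v)) *\<^sub>R u"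
    using rot_inner[OF assms] by (simp add: rot_axis_def)
  also have "\<dots> = rot_axis u (\<alpha> + \<beta>) v"
    unfolding cross_rot[OF assms] by (simp add: rot_axis_def cos_add sin_add algebra_simps)
  finally show ?thesis by simp
qed

lemma rot_deriv: assumes "u \<bullet> u = 1"
  shows "((\<lambda>t. rot_axis u (t * \<omega>) v) has_vector_derivative \<omega> *\<^sub>R cross3 u (rot_axis u (t * \<omega>) v)) (at t)"
proof -
  have "((\<lambda>t. rot_axis u (t * \<omega>) v) has_vector_derivative
     (- sin (t*\<omega>) * \<omega>) *\<^sub>R v + (cos (t*\<omega>) * \<omega>) *\<^sub>R cross3 u v + ((sin (t*\<omega>) * \<omega>) * (u \<bullet> v)) *\<^sub>R u) (at t)"
    unfolding rot_axis_def
    by (rule derivative_eq_intros refl | simp)+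
  moreover have "(- sin (t*\<omega>) * \<omega>) *\<^sub>R v + (cos (t*\<omega>) * \<omega>) *\<^sub>R cross3 u v + ((sin (t*\<omega>) * \<omega>) * (u \<bullet> v)) *\<^sub>R u
     = \<omega> *\<^sub>R cross3 u (rot_axis u (t * \<omega>) v)"
    unfolding cross_rot[OF assms] by (simp add: algebra_simps)
  ultimately show ?thesis by simp
qed



lemma bl_cross: "bounded_linear (cross3 a)"
proof -
  have "linear (cross3 a)" by (rule linearI) (simp_all add: cross_add_right cross_mult_right)
  then show ?thesis by (simp add: linear_conv_bounded_linear)
qed

lemma norm_cross_le: "norm (cross3 a h) \<le> norm a * norm h"
proof (rule power2_le_imp_le)
  show "(norm (cross3 a h))\<^sup>2 \<le> (norm a * norm h)\<^sup>2" using norm_cross_dot[of a h] zero_le_power2[of "a \<bullet> h"] by linarith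
qed simp

lemma linear_bound_basis:
  fixes f :: "'a::euclidean_space \<Rightarrow> 'b::real_normed_vector"
  assumes lf: "linear f"
  shows "norm (f x) \<le> (\<Sum>b\<in>Basis. norm (f b)) * norm x"
proof -
  interpret linear f by fact
  let ?g = "\<lambda>b. (x \<bullet> b) *\<^sub>R f b"
  have "norm (f x) = norm (f (\<Sum>b\<in>Basis. (x \<bullet> b) *\<^sub>R b))"
    unfolding euclidean_representation ..
  also have "\<dots> = norm (sum ?g Basis)"
    by (simp add: sum scale)
  finally have th0: "norm (f x) = norm (sum ?g Basis)" .
  have th: "norm (?g i) \<le> norm (f i) * norm x" if "i \<in> Basis" for i
  proof -
    from Basis_le_norm[OF that, of x]
    show "norm (?g i) \<le> norm (f i) * norm x"
      unfolding norm_scaleR by (metis mult.commute mult_left_mono norm_ge_zero)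
  qed
  from sum_norm_le[of _ ?g, OF th]
  show "norm (f x) \<le> (\<Sum>b\<in>Basis. norm (f b)) * norm x"
    by (simp add: sum_distrib_right th0)
qed

lemma g_lipschitz:
  fixes \<phi> :: "real^3 \<Rightarrow> real" and \<phi>' :: "real^3 \<Rightarrow> real^3" and \<phi>'' :: "real^3 \<Rightarrow> real^3 \<Rightarrow> real^3"
  assumes U: "open U" and S: "cball p r0 \<subseteq> U"
    and d1: "\<forall>x\<in>U. (\<phi>' has_derivative \<phi>'' x) (at x)"
    and c2: "\<forall>h. continuous_on U (\<lambda>x. \<phi>'' x h)"
  shows "\<exists>L\<ge>0. \<forall>y\<in>cball p r0. \<forall>z\<in>cball p r0.
     \<bar>\<phi>' y \<bullet> (cross3 a y + b) - \<phi>' z \<bullet> (cross3 a z + b)\<bar> \<le> L * norm (y - z)"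
proof -
  let ?w = "\<lambda>x. cross3 a x + b"
  let ?g = "\<lambda>x. \<phi>' x \<bullet> ?w x"
  let ?g' = "\<lambda>x h. \<phi>' x \<bullet> cross3 a h + \<phi>'' x h \<bullet> ?w x"
  have dw: "(?w has_derivative cross3 a) (at x)" for x
    by (rule derivative_eq_intros bounded_linear.has_derivative[OF bl_cross] | simp)+
  have dg: "(?g has_derivative ?g' x) (at x)" if "x \<in> U" for x
    by (rule has_derivative_inner[OF d1[rule_format, OF that] dw])
  let ?M = "\<lambda>y. (\<Sum>b\<in>Basis. norm (\<phi>'' y b)) * norm (?w y) + norm (\<phi>' y) * norm a"
  have cphi': "continuous_on U \<phi>'"
    using d1 by (intro has_derivative_continuous_on) (auto intro: has_derivative_at_withinI)
  have cw: "continuous_on U ?w"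
    by (intro continuous_intros continuous_on_cross)
  have cM: "continuous_on (cball p r0) ?M"
    using S by (intro continuous_intros continuous_on_subset[OF c2[rule_format]] continuous_on_subset[OF cw] continuous_on_subset[OF cphi'])
  have "compact (?M ` cball p r0)" by (rule compact_continuous_image[OF cM compact_cball])
  then obtain B where "\<forall>x\<in>?M ` cball p r0. norm x \<le> B"
    by (auto dest!: compact_imp_bounded simp: bounded_iff)
  then have B: "\<forall>y\<in>cball p r0. norm (?M y) \<le> B" by auto
  have bnd: "onorm (?g' y) \<le> max B 0" if y: "y \<in> cball p r0" for y
  proof (rule onorm_le)
    fix h
    have yU: "y \<in> U" using S y by auto
    have lin: "linear (\<phi>'' y)" using has_derivative_linear[OF d1[rule_format, OF yU]] .
    have "norm (?g' y h) \<le> \<bar>\<phi>' y \<bullet> cross3 a h\<bar> + \<bar>\<phi>'' y h \<bullet> ?w y\<bar>"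
      by (simp add: abs_triangle_ineq)
    also have "\<dots> \<le> norm (\<phi>' y) * (norm a * norm h) + ((\<Sum>b\<in>Basis. norm (\<phi>'' y b)) * norm h) * norm (?w y)"
    proof (rule add_mono)
      show "\<bar>\<phi>' y \<bullet> cross3 a h\<bar> \<le> norm (\<phi>' y) * (norm a * norm h)"
        using Cauchy_Schwarz_ineq2[of "\<phi>' y" "cross3 a h"] norm_cross_le[of a h]
        by (meson mult_left_mono norm_ge_zero order_trans)
      show "\<bar>\<phi>'' y h \<bullet> ?w y\<bar> \<le> ((\<Sum>b\<in>Basis. norm (\<phi>'' y b)) * norm h) * norm (?w y)"
        using Cauchy_Schwarz_ineq2[of "\<phi>'' y h" "?w y"] linear_bound_basis[OF lin, of h]
        by (meson mult_right_mono norm_ge_zero order_trans)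
    qed
    also have "\<dots> = ?M y * norm h" by (simp add: algebra_simps)
    also have "\<dots> \<le> max B 0 * norm h"
    proof (rule mult_right_mono)
      have "?M y \<le> norm (?M y)" by simp
      also have "\<dots> \<le> B" using B y by blast
      finally show "?M y \<le> max B 0" by simp
    qed simp
    finally show "norm (?g' y h) \<le> max B 0 * norm h" .
  qed
  have "\<forall>y\<in>cball p r0. \<forall>z\<in>cball p r0. norm (?g y - ?g z) \<le> max B 0 * norm (y - z)"
  proof (intro ballI)
    fix y z assume "y \<in> cball p r0" "z \<in> cball p r0"
    show "norm (?g y - ?g z) \<le> max B 0 * norm (y - z)"
      by (rule differentiable_bound[OF convex_cball _ bnd \<open>y \<in> cball p r0\<close> \<open>z \<in> cball p r0\<close>])
         (use S in \<open>auto intro!: has_derivative_at_withinI dg\<close>)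
  qed
  then show ?thesis by (intro exI[of _ "max B 0"]) auto
qed

lemma zero_near:
  fixes f f' :: "real \<Rightarrow> real"
  assumes m: "m > 0"
    and d: "\<And>s. \<bar>s\<bar> \<le> \<bar>f 0\<bar> / m \<Longrightarrow> (f has_real_derivative f' s) (at s) \<and> f' s \<le> - m"
  shows "\<exists>s. \<bar>s\<bar> \<le> \<bar>f 0\<bar> / m \<and> f s = 0"
proof -
  define s0 where "s0 = f 0 / m"
  have abs0: "\<bar>s0\<bar> = \<bar>f 0\<bar> / m" using m by (simp add: s0_def abs_div)
  let ?F = "\<lambda>s. f s + m * s"
  have dF: "(?F has_real_derivative f' s + m) (at s)" if "\<bar>s\<bar> \<le> \<bar>f 0\<bar> / m" for s
    using d[OF that] by (auto intro!: derivative_eq_intros)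
  have cont: "continuous_on {a..c} f" if "\<forall>s\<in>{a..c}. \<bar>s\<bar> \<le> \<bar>f 0\<bar> / m" for a c
    using d that by (intro DERIV_continuous_on[where D = f']) (auto intro: has_field_derivative_at_within)
  show ?thesis
  proof (cases "f 0 \<ge> 0")
    case True
    then have s0: "s0 \<ge> 0" using m by (simp add: s0_def)
    have in0: "\<forall>s\<in>{0..s0}. \<bar>s\<bar> \<le> \<bar>f 0\<bar> / m" using abs0 s0 by auto
    have "?F s0 \<le> ?F 0"
      by (rule DERIV_nonpos_imp_nonincreasing[OF s0]) (use in0 dF d in \<open>fastforce\<close>)
    then have "f s0 \<le> 0" using m by (simp add: s0_def)
    then obtain s where "0 \<le> s" "s \<le> s0" "f s = 0"
      using IVT2'[of f s0 0 0, OF _ True s0 cont[OF in0]] by auto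
    then show ?thesis using in0 by (intro exI[of _ s]) auto
  next
    case False
    then have s0: "s0 \<le> 0" using m by (simp add: s0_def divide_nonpos_pos)
    have in0: "\<forall>s\<in>{s0..0}. \<bar>s\<bar> \<le> \<bar>f 0\<bar> / m" using abs0 s0 by auto
    have "?F 0 \<le> ?F s0"
      by (rule DERIV_nonpos_imp_nonincreasing[OF s0]) (use in0 dF d in \<open>fastforce\<close>)
    then have "f s0 \<ge> 0" using m by (simp add: s0_def)
    then obtain s where "s0 \<le> s" "s \<le> 0" "f s = 0"
      using IVT2'[of f 0 0 s0, OF _ \<open>f s0 \<ge> 0\<close> s0 cont[OF in0]] False by auto
    then show ?thesis using in0 by (intro exI[of _ s]) auto
  qed
qed



lemma local_bound:
  fixes \<phi> :: "real^3 \<Rightarrow> real" and \<phi>' :: "real^3 \<Rightarrow> real^3" and \<phi>'' :: "real^3 \<Rightarrow> real^3 \<Rightarrow> real^3"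
  assumes U: "open U" "p \<in> U"
    and d0: "\<forall>x\<in>U. (\<phi> has_derivative (\<lambda>h. \<phi>' x \<bullet> h)) (at x)"
    and d1: "\<forall>x\<in>U. (\<phi>' has_derivative \<phi>'' x) (at x)"
    and c2: "\<forall>h. continuous_on U (\<lambda>x. \<phi>'' x h)"
    and nz: "\<phi>' p \<noteq> 0" and php: "\<phi> p = 0"
    and g0: "\<forall>y\<in>U. \<phi> y = 0 \<longrightarrow> \<phi>' y \<bullet> (cross3 a y + b) = 0"
  shows "\<exists>r>0. \<exists>K. ball p r \<subseteq> U \<and> (\<forall>y\<in>ball p r. \<bar>\<phi>' y \<bullet> (cross3 a y + b)\<bar> \<le> K * \<bar>\<phi> y\<bar>)"
proof -
  let ?g = "\<lambda>x. \<phi>' x \<bullet> (cross3 a x + b)"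
  define v where "v = \<phi>' p"
  define m where "m = (norm v)\<^sup>2 / 2"
  have nv: "norm v > 0" using nz by (simp add: v_def)
  have m0: "m > 0" using nv by (simp add: m_def)
  have "continuous (at p) \<phi>'" using d1 U(2) by (auto intro: has_derivative_continuous)
  then obtain r1 where r1: "r1 > 0" "\<forall>y. dist y p < r1 \<longrightarrow> dist (\<phi>' y) v < norm v / 2"
    unfolding continuous_at_eps_delta v_def using nv v_def by (metis half_gt_zero)
  have pos: "\<phi>' y \<bullet> v \<ge> m" if "dist y p < r1" for y
  proof -
    have n: "norm (\<phi>' y - v) < norm v / 2" using r1(2) that by (simp add: dist_norm)
    have "\<bar>(\<phi>' y - v) \<bullet> v\<bar> \<le> norm (\<phi>' y - v) * norm v" by (rule Cauchy_Schwarz_ineq2)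
    also have "\<dots> \<le> norm v / 2 * norm v" using n by (intro mult_right_mono) auto
    finally have "\<bar>(\<phi>' y - v) \<bullet> v\<bar> \<le> norm v / 2 * norm v" .
    moreover have "\<phi>' y \<bullet> v = v \<bullet> v + (\<phi>' y - v) \<bullet> v" by (simp add: inner_diff_left)
    moreover have "v \<bullet> v = (norm v)\<^sup>2" by (simp add: power2_norm_eq_inner)
    ultimately show ?thesis unfolding m_def by (simp add: power2_eq_square abs_le_iff)
  qed
  obtain e where e: "e > 0" "ball p e \<subseteq> U" using U openE by blast
  define r0 where "r0 = min (e/2) (r1/2)"
  have r0: "r0 > 0" using e r1 by (simp add: r0_def)
  have cbU: "cball p r0 \<subseteq> U" using e(2) e(1) r1(1) by (auto simp: r0_def subset_iff dist_commute)
  have cbr1: "dist y p < r1" if "dist p y \<le> r0" for y using that r1(1) by (simp add: r0_def dist_commute)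
  obtain L where L: "L \<ge> 0" "\<forall>y\<in>cball p r0. \<forall>z\<in>cball p r0. \<bar>?g y - ?g z\<bar> \<le> L * norm (y - z)"
    using g_lipschitz[OF U(1) cbU d1 c2, of a b] by blast
  have "continuous (at p) \<phi>" using d0 U(2) by (auto intro: has_derivative_continuous)
  moreover have "m * r0 / (2 * norm v) > 0" using m0 r0 nv by simp
  ultimately obtain r2 where r2: "r2 > 0" "\<forall>y. dist y p < r2 \<longrightarrow> dist (\<phi> y) (\<phi> p) < m * r0 / (2 * norm v)"
    unfolding continuous_at_eps_delta by blast
  define r where "r = min (r0/2) r2"
  have r: "r > 0" using r0 r2 by (simp add: r_def)
  have "ball p r \<subseteq> U"
  proof
    fix x assume "x \<in> ball p r"
    then have "x \<in> cball p r0" using r0 by (simp add: r_def)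
    with cbU show "x \<in> U" by blast
  qed
  moreover have "\<bar>?g y\<bar> \<le> (L * norm v / m) * \<bar>\<phi> y\<bar>" if y: "y \<in> ball p r" for y
  proof -
    have yr0: "dist p y < r0 / 2" using y by (simp add: r_def)
    have phy: "\<bar>\<phi> y\<bar> < m * r0 / (2 * norm v)" using r2(2) y php by (simp add: r_def dist_commute dist_real_def)
    let ?f = "\<lambda>s. \<phi> (y - s *\<^sub>R v)"
    have inball: "dist p (y - s *\<^sub>R v) < r0" if s: "\<bar>s\<bar> \<le> \<bar>\<phi> y\<bar> / m" for s
    proof -
      have "\<bar>s\<bar> * norm v \<le> \<bar>\<phi> y\<bar> / m * norm v" using s by (intro mult_right_mono) auto
      also have "\<dots> < m * r0 / (2 * norm v) / m * norm v" using phy m0 nv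
        by (intro mult_strict_right_mono divide_strict_right_mono) auto
      also have "\<dots> = r0 / 2" using m0 nv by (simp add: field_simps)
      finally have ns: "\<bar>s\<bar> * norm v < r0 / 2" .
      have "dist p (y - s *\<^sub>R v) \<le> dist p y + dist y (y - s *\<^sub>R v)" by (rule dist_triangle)
      moreover have "dist y (y - s *\<^sub>R v) = \<bar>s\<bar> * norm v" by (simp add: dist_norm)
      ultimately show ?thesis using yr0 ns by linarith
    qed
    have "\<exists>s. \<bar>s\<bar> \<le> \<bar>?f 0\<bar> / m \<and> ?f s = 0"
    proof (rule zero_near[OF m0, where f' = "\<lambda>s. - (\<phi>' (y - s *\<^sub>R v) \<bullet> v)"])
      fix s assume s: "\<bar>s\<bar> \<le> \<bar>?f 0\<bar> / m"
      then have sb: "dist p (y - s *\<^sub>R v) < r0" using inball by simp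
      then have zU: "y - s *\<^sub>R v \<in> U" using cbU by auto
      have "((\<lambda>s. y - s *\<^sub>R v) has_derivative (\<lambda>h. - (h *\<^sub>R v))) (at s)"
        by (rule derivative_eq_intros refl | simp)+
      from has_derivative_compose[OF this d0[rule_format, OF zU]]
      have "(?f has_derivative (\<lambda>h. \<phi>' (y - s *\<^sub>R v) \<bullet> - (h *\<^sub>R v))) (at s)" .
      moreover have "(\<lambda>h. \<phi>' (y - s *\<^sub>R v) \<bullet> - (h *\<^sub>R v)) = (*) (- (\<phi>' (y - s *\<^sub>R v) \<bullet> v))"
        by (auto simp: fun_eq_iff)
      ultimately have "(?f has_real_derivative - (\<phi>' (y - s *\<^sub>R v) \<bullet> v)) (at s)"
        by (simp add: has_field_derivative_def)
      moreover have "- (\<phi>' (y - s *\<^sub>R v) \<bullet> v) \<le> - m" using pos[OF cbr1] sb by simp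
      ultimately show "(?f has_real_derivative - (\<phi>' (y - s *\<^sub>R v) \<bullet> v)) (at s) \<and> - (\<phi>' (y - s *\<^sub>R v) \<bullet> v) \<le> - m"
        by blast
    qed
    then obtain s where s: "\<bar>s\<bar> \<le> \<bar>\<phi> y\<bar> / m" "\<phi> (y - s *\<^sub>R v) = 0" by auto
    define z where "z = y - s *\<^sub>R v"
    have zb: "z \<in> cball p r0" using inball[OF s(1)] by (simp add: z_def)
    have "dist p y \<le> r0" using yr0 zero_le_dist[of p y] by linarith
    then have yb: "y \<in> cball p r0" by simp
    have gz: "?g z = 0" using g0 zb cbU s(2) by (auto simp: z_def)
    have "\<bar>?g y\<bar> = \<bar>?g y - ?g z\<bar>" using gz by simp
    also have "\<dots> \<le> L * norm (y - z)" using L(2) yb zb by blast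
    also have "norm (y - z) = \<bar>s\<bar> * norm v" by (simp add: z_def)
    also have "L * (\<bar>s\<bar> * norm v) \<le> L * (\<bar>\<phi> y\<bar> / m * norm v)"
      using s(1) L(1) by (intro mult_left_mono mult_right_mono) auto
    also have "\<dots> = (L * norm v / m) * \<bar>\<phi> y\<bar>" by simp
    finally show ?thesis .
  qed
  ultimately show ?thesis using r by blast
qed



lemma chart_at:
  assumes S: "closed_C2_surface \<Gamma> nrm" and p: "p \<in> \<Gamma>"
  obtains U and \<phi> :: "real^3 \<Rightarrow> real" and \<phi>' \<phi>'' where
    "open U" "p \<in> U"
    "\<forall>x\<in>U. (\<phi> has_derivative (\<lambda>h. \<phi>' x \<bullet> h)) (at x)"
    "\<forall>x\<in>U. (\<phi>' has_derivative \<phi>'' x) (at x)"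
    "\<forall>h. continuous_on U (\<lambda>x. \<phi>'' x h)"
    "\<forall>x\<in>U. \<phi>' x \<noteq> 0"
    "\<Gamma> \<inter> U = {x\<in>U. \<phi> x = 0}"
    "\<forall>x\<in>\<Gamma> \<inter> U. nrm x = (1 / norm (\<phi>' x)) *\<^sub>R \<phi>' x"
proof -
  from S have "\<exists>\<Omega>. open \<Omega> \<and> bounded \<Omega> \<and> frontier \<Omega> = \<Gamma> \<and>
       (\<forall>p\<in>\<Gamma>. \<exists>U (\<phi>::real^3 \<Rightarrow> real) \<phi>' \<phi>''.
          open U \<and> p \<in> U \<and>
          (\<forall>x\<in>U. (\<phi> has_derivative (\<lambda>h. \<phi>' x \<bullet> h)) (at x)) \<and>
          (\<forall>x\<in>U. (\<phi>' has_derivative \<phi>'' x) (at x)) \<and>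
          (\<forall>h. continuous_on U (\<lambda>x. \<phi>'' x h)) \<and>
          (\<forall>x\<in>U. \<phi>' x \<noteq> 0) \<and>
          \<Gamma> \<inter> U = {x\<in>U. \<phi> x = 0} \<and>
          \<Omega> \<inter> U = {x\<in>U. \<phi> x < 0} \<and>
          (\<forall>x\<in>\<Gamma> \<inter> U. nrm x = (1 / norm (\<phi>' x)) *\<^sub>R \<phi>' x))"
    unfolding closed_C2_surface_def by (elim conjE)
  then obtain \<Omega> where "\<forall>p\<in>\<Gamma>. \<exists>U (\<phi>::real^3 \<Rightarrow> real) \<phi>' \<phi>''.
          open U \<and> p \<in> U \<and>
          (\<forall>x\<in>U. (\<phi> has_derivative (\<lambda>h. \<phi>' x \<bullet> h)) (at x)) \<and>
          (\<forall>x\<in>U. (\<phi>' has_derivative \<phi>'' x) (at x)) \<and>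
          (\<forall>h. continuous_on U (\<lambda>x. \<phi>'' x h)) \<and>
          (\<forall>x\<in>U. \<phi>' x \<noteq> 0) \<and>
          \<Gamma> \<inter> U = {x\<in>U. \<phi> x = 0} \<and>
          \<Omega> \<inter> U = {x\<in>U. \<phi> x < 0} \<and>
          (\<forall>x\<in>\<Gamma> \<inter> U. nrm x = (1 / norm (\<phi>' x)) *\<^sub>R \<phi>' x)"
    by (elim exE conjE)
  from this[rule_format, OF p] obtain U and \<phi> :: "real^3 \<Rightarrow> real" and \<phi>' \<phi>'' where
    "open U \<and> p \<in> U \<and>
          (\<forall>x\<in>U. (\<phi> has_derivative (\<lambda>h. \<phi>' x \<bullet> h)) (at x)) \<and>
          (\<forall>x\<in>U. (\<phi>' has_derivative \<phi>'' x) (at x)) \<and>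
          (\<forall>h. continuous_on U (\<lambda>x. \<phi>'' x h)) \<and>
          (\<forall>x\<in>U. \<phi>' x \<noteq> 0) \<and>
          \<Gamma> \<inter> U = {x\<in>U. \<phi> x = 0} \<and>
          \<Omega> \<inter> U = {x\<in>U. \<phi> x < 0} \<and>
          (\<forall>x\<in>\<Gamma> \<inter> U. nrm x = (1 / norm (\<phi>' x)) *\<^sub>R \<phi>' x)"
    by (elim exE)
  then show ?thesis using that by (elim conjE) 
qed



lemma local_invariance:
  assumes S: "closed_C2_surface \<Gamma> nrm"
    and tang: "\<forall>x\<in>\<Gamma>. (cross3 a x + b) \<bullet> nrm x = 0"
    and G0: "\<forall>x. G 0 x = x"
    and Gd: "\<forall>t x. ((\<lambda>t. G t x) has_vector_derivative (cross3 a (G t x) + b)) (at t)"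
    and p: "p \<in> \<Gamma>"
  shows "\<exists>\<delta>>0. \<forall>s. \<bar>s\<bar> < \<delta> \<longrightarrow> G s p \<in> \<Gamma>"
proof -
  let ?w = "\<lambda>x. cross3 a x + b"
  obtain U and \<phi> :: "real^3 \<Rightarrow> real" and \<phi>' \<phi>'' where
    U: "open U" "p \<in> U" and
    d0: "\<forall>x\<in>U. (\<phi> has_derivative (\<lambda>h. \<phi>' x \<bullet> h)) (at x)" and
    d1: "\<forall>x\<in>U. (\<phi>' has_derivative \<phi>'' x) (at x)" and
    c2: "\<forall>h. continuous_on U (\<lambda>x. \<phi>'' x h)" and
    nz: "\<forall>x\<in>U. \<phi>' x \<noteq> 0" and
    GU: "\<Gamma> \<inter> U = {x\<in>U. \<phi> x = 0}" and
    nr: "\<forall>x\<in>\<Gamma> \<inter> U. nrm x = (1 / norm (\<phi>' x)) *\<^sub>R \<phi>' x"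
    by (rule chart_at[OF S p])
  have php: "\<phi> p = 0" using GU p U(2) by blast
  have g0: "\<forall>y\<in>U. \<phi> y = 0 \<longrightarrow> \<phi>' y \<bullet> ?w y = 0"
  proof (intro ballI impI)
    fix y assume y: "y \<in> U" "\<phi> y = 0"
    then have yG: "y \<in> \<Gamma>" using GU by blast
    then have "?w y \<bullet> ((1 / norm (\<phi>' y)) *\<^sub>R \<phi>' y) = 0" using tang nr y by auto
    then show "\<phi>' y \<bullet> ?w y = 0" using nz y by (simp add: inner_commute)
  qed
  obtain r K where r: "r > 0" "ball p r \<subseteq> U"
    and K: "\<forall>y\<in>ball p r. \<bar>\<phi>' y \<bullet> ?w y\<bar> \<le> K * \<bar>\<phi> y\<bar>"
    using local_bound[OF U d0 d1 c2 _ php g0] nz U(2) by blast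
  have "continuous (at 0) (\<lambda>t. G t p)"
    by (rule has_vector_derivative_continuous[OF Gd[rule_format]])
  then obtain \<delta> where \<delta>: "\<delta> > 0" "\<forall>s. dist s 0 < \<delta> \<longrightarrow> dist (G s p) (G 0 p) < r"
    unfolding continuous_at_eps_delta using r(1) by blast
  have inb: "G s p \<in> ball p r" if "\<bar>s\<bar> < \<delta>" for s
    using \<delta>(2) that G0 by (auto simp: dist_commute)
  let ?\<psi> = "\<lambda>s. \<phi> (G s p)"
  let ?\<psi>' = "\<lambda>s. \<phi>' (G s p) \<bullet> ?w (G s p)"
  have zero: "?\<psi> s = 0" if s: "\<bar>s\<bar> < \<delta>" for s
  proof (rule gronwall[where \<psi> = ?\<psi> and \<psi>' = ?\<psi>' and K = K and \<delta> = \<delta> and t = s])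
    fix t :: real assume t: "\<bar>t\<bar> < \<delta>"
    have tU: "G t p \<in> U" using inb[OF t] r(2) by blast
    have "((\<lambda>t. G t p) has_derivative (\<lambda>h. h *\<^sub>R ?w (G t p))) (at t)"
      using Gd by (simp add: has_vector_derivative_def)
    from has_derivative_compose[OF this d0[rule_format, OF tU]]
    have "(?\<psi> has_derivative (\<lambda>h. \<phi>' (G t p) \<bullet> (h *\<^sub>R ?w (G t p)))) (at t)" .
    moreover have "(\<lambda>h. \<phi>' (G t p) \<bullet> (h *\<^sub>R ?w (G t p))) = (*) (?\<psi>' t)"
      by (auto simp: fun_eq_iff)
    ultimately show "(?\<psi> has_real_derivative ?\<psi>' t) (at t)"
      by (simp add: has_field_derivative_def)
    show "\<bar>?\<psi>' t\<bar> \<le> K * \<bar>?\<psi> t\<bar>" using K inb[OF t] by blast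
  qed (use s G0 php in auto)
  have "G s p \<in> \<Gamma>" if s: "\<bar>s\<bar> < \<delta>" for s
    using zero[OF s] inb[OF s] r(2) GU by blast
  then show ?thesis using \<delta>(1) by blast
qed

lemma invariance:
  assumes S: "closed_C2_surface \<Gamma> nrm"
    and tang: "\<forall>x\<in>\<Gamma>. (cross3 a x + b) \<bullet> nrm x = 0"
    and G0: "\<forall>x. G 0 x = x"
    and Gadd: "\<forall>s t x. G (s + t) x = G s (G t x)"
    and Gd: "\<forall>t x. ((\<lambda>t. G t x) has_vector_derivative (cross3 a (G t x) + b)) (at t)"
    and x: "x \<in> \<Gamma>"
  shows "G t x \<in> \<Gamma>"
proof -
  let ?A = "(\<lambda>t. G t x) -` \<Gamma>"
  have "closed \<Gamma>" using S compact_imp_closed unfolding closed_C2_surface_def by blast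
  then have cl: "closed ?A"
    by (rule continuous_closed_vimage[OF _ has_vector_derivative_continuous[OF Gd[rule_format]]])
  have op: "open ?A"
  proof (rule openI)
    fix t0 assume "t0 \<in> ?A"
    then have "G t0 x \<in> \<Gamma>" by simp
    from local_invariance[OF S tang G0 Gd this] obtain \<delta> where
      \<delta>: "\<delta> > 0" "\<forall>s. \<bar>s\<bar> < \<delta> \<longrightarrow> G s (G t0 x) \<in> \<Gamma>" by blast
    have "ball t0 \<delta> \<subseteq> ?A"
    proof
      fix t assume "t \<in> ball t0 \<delta>"
      then have "\<bar>t - t0\<bar> < \<delta>" by (simp add: dist_real_def abs_minus_commute)
      then have "G (t - t0) (G t0 x) \<in> \<Gamma>" using \<delta> by blast
      moreover have "G t x = G (t - t0) (G t0 x)" using Gadd[rule_format, of "t - t0" t0 x] by simp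
      ultimately show "t \<in> ?A" by simp
    qed
    then show "\<exists>e>0. ball t0 e \<subseteq> ?A" using \<delta>(1) by blast
  qed
  have "0 \<in> ?A" using G0 x by simp
  then have "?A = UNIV" using clopen[of ?A] cl op by blast
  then show ?thesis by auto
qed



lemma cross_axes_zero:
  assumes "cross3 a (axis 1 1) = 0" "cross3 a (axis 2 1) = 0" "cross3 a (axis 3 1) = 0"
  shows "a = (0::real^3)"
  using assms by (simp add: cross3_simps axis_def forall_3)

lemma converse_part:
  assumes S: "closed_C2_surface \<Gamma> nrm" and a: "a \<noteq> 0" and ax: "axially_symmetric \<Gamma> a bt"
  shows "(\<lambda>x. cross3 a (x - bt)) \<in> rigid_tangent \<Gamma> nrm - {(\<lambda>x. 0)}"
proof -
  define u where "u = (1 / norm a) *\<^sub>R a"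
  have uu: "u \<bullet> u = 1" using a by (simp add: u_def power2_norm_eq_inner[symmetric] power2_eq_square)
  have au: "a = norm a *\<^sub>R u" using a by (simp add: u_def)
  have form: "(\<lambda>x. cross3 a (x - bt)) = (\<lambda>x. cross3 a x + - cross3 a bt)"
  proof
    fix x
    have "cross3 a (x - bt) = cross3 a (x + - bt)" by simp
    also have "\<dots> = cross3 a x + - cross3 a bt" by (simp only: cross_add_right cross_minus_right)
    finally show "cross3 a (x - bt) = cross3 a x + - cross3 a bt" .
  qed
  have tang: "cross3 a (x - bt) \<bullet> nrm x = 0" if x: "x \<in> \<Gamma>" for x
  proof -
    obtain U and \<phi> :: "real^3 \<Rightarrow> real" and \<phi>' \<phi>'' where
      U: "open U" "x \<in> U" and
      d0: "\<forall>x\<in>U. (\<phi> has_derivative (\<lambda>h. \<phi>' x \<bullet> h)) (at x)" and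
      nz: "\<forall>x\<in>U. \<phi>' x \<noteq> 0" and
      GU: "\<Gamma> \<inter> U = {x\<in>U. \<phi> x = 0}" and
      nr: "\<forall>x\<in>\<Gamma> \<inter> U. nrm x = (1 / norm (\<phi>' x)) *\<^sub>R \<phi>' x"
      by (rule chart_at[OF S x]) blast
    let ?\<gamma> = "\<lambda>\<theta>. bt + rot_axis u \<theta> (x - bt)"
    have inG: "?\<gamma> \<theta> \<in> \<Gamma>" for \<theta>
      using ax x unfolding axially_symmetric_def u_def[symmetric] by blast
    have g0: "?\<gamma> 0 = x" by (simp add: rot0)
    have dr: "((\<lambda>t. rot_axis u t (x - bt)) has_vector_derivative cross3 u (rot_axis u t (x - bt))) (at t)" for t
      using rot_deriv[OF uu, of 1 "x - bt" t] by simp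
    have d\<gamma>: "(?\<gamma> has_vector_derivative cross3 u (x - bt)) (at 0)"
      using has_vector_derivative_add[OF has_vector_derivative_const[of bt] dr[of 0]] by (simp add: rot0)
    then have dg: "(?\<gamma> has_derivative (\<lambda>h. h *\<^sub>R cross3 u (x - bt))) (at 0)"
      by (simp add: has_vector_derivative_def)
    have dx: "(\<phi> has_derivative (\<lambda>h. \<phi>' x \<bullet> h)) (at (?\<gamma> 0))"
      using d0 U(2) by (simp add: g0)
    from has_derivative_compose[OF dg dx]
    have "((\<lambda>\<theta>. \<phi> (?\<gamma> \<theta>)) has_derivative (\<lambda>h. \<phi>' x \<bullet> (h *\<^sub>R cross3 u (x - bt)))) (at 0)" .
    moreover have "(\<lambda>h. \<phi>' x \<bullet> (h *\<^sub>R cross3 u (x - bt))) = (*) (\<phi>' x \<bullet> cross3 u (x - bt))"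
      by (auto simp: fun_eq_iff)
    ultimately have D1: "((\<lambda>\<theta>. \<phi> (?\<gamma> \<theta>)) has_real_derivative (\<phi>' x \<bullet> cross3 u (x - bt))) (at 0)"
      by (simp add: has_field_derivative_def)
    have cg: "continuous_on UNIV ?\<gamma>"
      using dr by (intro continuous_intros) (auto simp: continuous_on_eq_continuous_at intro: has_vector_derivative_continuous)
    have oS: "open (?\<gamma> -` U)" using open_vimage[OF U(1) cg] by simp
    have D2: "((\<lambda>\<theta>. \<phi> (?\<gamma> \<theta>)) has_real_derivative 0) (at 0)"
    proof (rule has_field_derivative_transform_within_open[OF DERIV_const oS])
      show "0 \<in> ?\<gamma> -` U" using g0 U(2) by simp
      fix \<theta> assume "\<theta> \<in> ?\<gamma> -` U"
      then have "?\<gamma> \<theta> \<in> \<Gamma> \<inter> U" using inG[of \<theta>] by simp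
      then have "?\<gamma> \<theta> \<in> {x\<in>U. \<phi> x = 0}" using GU by simp
      then show "0 = \<phi> (?\<gamma> \<theta>)" by simp
    qed
    have z: "\<phi>' x \<bullet> cross3 u (x - bt) = 0" using DERIV_unique[OF D1 D2] .
    have "cross3 a (x - bt) = norm a *\<^sub>R cross3 u (x - bt)"
      by (subst au) (simp add: cross_mult_left)
    then show ?thesis using nr x U(2) z by (simp add: inner_commute)
  qed
  have nz: "(\<lambda>x. cross3 a (x - bt)) \<noteq> (\<lambda>x. 0)"
  proof
    assume "(\<lambda>x. cross3 a (x - bt)) = (\<lambda>x. 0)"
    then have "\<And>i. cross3 a (bt + axis i 1 - bt) = 0" by metis
    then have "a = 0" using cross_axes_zero by simp
    with a show False by simp
  qed
  show ?thesis unfolding rigid_tangent_def using form tang nz by blast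
qed



lemma bounded_dot:
  assumes "compact \<Gamma>"
  obtains B where "\<forall>y\<in>\<Gamma>. norm y \<le> B"
  using assms compact_imp_bounded bounded_iff by blast

lemma forward_part:
  assumes S: "closed_C2_surface \<Gamma> nrm"
    and tang: "\<forall>x\<in>\<Gamma>. (cross3 a x + b) \<bullet> nrm x = 0"
    and nz: "(\<lambda>x. cross3 a x + b) \<noteq> (\<lambda>x. 0)"
  shows "a \<noteq> 0 \<and> a \<bullet> b = 0 \<and> axially_symmetric \<Gamma> a ((1 / (norm a)^2) *\<^sub>R cross3 a b)"
proof -
  obtain x0 where x0: "x0 \<in> \<Gamma>" using S unfolding closed_C2_surface_def by blast
  obtain B where B: "\<forall>y\<in>\<Gamma>. norm y \<le> B"
    using S bounded_dot unfolding closed_C2_surface_def by metis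
  have a: "a \<noteq> 0"
  proof
    assume a0: "a = 0"
    then have b: "b \<noteq> 0" using nz by auto
    let ?G = "\<lambda>t x. x + t *\<^sub>R b"
    have inv: "?G t x \<in> \<Gamma>" if "x \<in> \<Gamma>" for t x
    proof (rule invariance[OF S tang, where G = ?G])
      show "\<forall>t x. ((\<lambda>t. ?G t x) has_vector_derivative (cross3 a (?G t x) + b)) (at t)"
        using a0 by (auto intro!: derivative_eq_intros)
    qed (auto simp: algebra_simps that)
    define t where "t = (B + norm x0 + 1) / norm b"
    have "norm (t *\<^sub>R b) = B + norm x0 + 1"
    proof -
      have "norm x0 \<le> B" using B x0 by blast
      then have "\<bar>B + norm x0 + 1\<bar> = B + norm x0 + 1" using norm_ge_zero[of x0] by linarith
      then show ?thesis using b by (simp add: t_def)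
    qed
    moreover have "norm (t *\<^sub>R b) \<le> norm (?G t x0) + norm x0"
      by (metis add_diff_cancel_left' norm_triangle_ineq4)
    moreover have "norm (?G t x0) \<le> B" using B inv[OF x0] by blast
    ultimately show False by linarith
  qed
  define u where "u = (1 / norm a) *\<^sub>R a"
  define \<omega> where "\<omega> = norm a"
  define c where "c = (1 / (norm a)^2) *\<^sub>R cross3 a b"
  define \<beta> where "\<beta> = (a \<bullet> b) / norm a"
  have uu: "u \<bullet> u = 1" using a by (simp add: u_def power2_norm_eq_inner[symmetric] power2_eq_square)
  have au: "a = \<omega> *\<^sub>R u" using a by (simp add: u_def \<omega>_def)
  have \<omega>0: "\<omega> > 0" using a by (simp add: \<omega>_def)
  let ?G = "\<lambda>t x. c + rot_axis u (t * \<omega>) (x - c) + t *\<^sub>R (\<beta> *\<^sub>R u)"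
  have G0: "\<forall>x. ?G 0 x = x" by (simp add: rot0)
  have Gadd: "\<forall>s t x. ?G (s + t) x = ?G s (?G t x)"
  proof (intro allI)
    fix s t x
    have "?G s (?G t x) = c + rot_axis u (s * \<omega>) (rot_axis u (t * \<omega>) (x - c)) + rot_axis u (s * \<omega>) ((t * \<beta>) *\<^sub>R u) + s *\<^sub>R (\<beta> *\<^sub>R u)"
      by (simp add: rot_add_vec)
    also have "\<dots> = ?G (s + t) x"
      by (simp add: rot_axis_fix[OF uu] rot_comp[OF uu, symmetric] distrib_right algebra_simps)
    finally show "?G (s + t) x = ?G s (?G t x)" by simp
  qed
  have acb: "cross3 a c + b = \<beta> *\<^sub>R u"
  proof -
    have "cross3 a c = (1 / (norm a)^2) *\<^sub>R ((a \<bullet> b) *\<^sub>R a - (a \<bullet> a) *\<^sub>R b)"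
      by (simp add: c_def cross_mult_right cross_cross_same)
    also have "\<dots> = \<beta> *\<^sub>R u - b"
      using a by (simp add: \<beta>_def u_def power2_norm_eq_inner[symmetric] algebra_simps power2_eq_square)
    finally show ?thesis by simp
  qed
  have Gd: "\<forall>t x. ((\<lambda>t. ?G t x) has_vector_derivative (cross3 a (?G t x) + b)) (at t)"
  proof (intro allI)
    fix t x
    have "((\<lambda>t. ?G t x) has_vector_derivative (\<omega> *\<^sub>R cross3 u (rot_axis u (t * \<omega>) (x - c)) + \<beta> *\<^sub>R u)) (at t)"
      using rot_deriv[OF uu, of \<omega> "x - c" t]
      by (auto intro!: derivative_eq_intros)
    moreover have "cross3 a (?G t x) + b = \<omega> *\<^sub>R cross3 u (rot_axis u (t * \<omega>) (x - c)) + \<beta> *\<^sub>R u"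
    proof -
      have "cross3 a (?G t x) = cross3 a c + cross3 a (rot_axis u (t * \<omega>) (x - c)) + cross3 a (t *\<^sub>R (\<beta> *\<^sub>R u))"
        by (simp add: cross_add_right)
      also have "cross3 a (t *\<^sub>R (\<beta> *\<^sub>R u)) = 0"
        by (subst au) (simp add: cross_mult_right cross_mult_left)
      also have "cross3 a (rot_axis u (t * \<omega>) (x - c)) = \<omega> *\<^sub>R cross3 u (rot_axis u (t * \<omega>) (x - c))"
        by (subst au) (simp add: cross_mult_left)
      finally show ?thesis using acb by (simp add: algebra_simps)
    qed
    ultimately show "((\<lambda>t. ?G t x) has_vector_derivative (cross3 a (?G t x) + b)) (at t)" by simp
  qed
  have inv: "?G t x \<in> \<Gamma>" if "x \<in> \<Gamma>" for t x
    by (rule invariance[OF S tang G0 Gadd Gd that])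
  have ab: "a \<bullet> b = 0"
  proof (rule ccontr)
    assume ab: "a \<bullet> b \<noteq> 0"
    have ac: "a \<bullet> c = 0" by (simp add: c_def dot_cross_self)
    have aG: "a \<bullet> ?G t x0 = a \<bullet> x0 + t * (a \<bullet> b)" for t
    proof -
      have "a \<bullet> rot_axis u (t * \<omega>) (x0 - c) = a \<bullet> (x0 - c)"
        by (subst (1 2) au) (simp add: rot_inner[OF uu])
      moreover have "a \<bullet> (\<beta> *\<^sub>R u) = a \<bullet> b"
        using a by (simp add: \<beta>_def u_def power2_norm_eq_inner[symmetric] power2_eq_square)
      ultimately show ?thesis using ac by (simp add: inner_add_right inner_diff_right)
    qed
    define t where "t = (norm a * B + \<bar>a \<bullet> x0\<bar> + 1) / (a \<bullet> b)"
    have "t * (a \<bullet> b) = norm a * B + \<bar>a \<bullet> x0\<bar> + 1" using ab by (simp add: t_def)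
    then have "a \<bullet> ?G t x0 = a \<bullet> x0 + (norm a * B + \<bar>a \<bullet> x0\<bar> + 1)" using aG[of t] by simp
    moreover have "\<bar>a \<bullet> ?G t x0\<bar> \<le> norm a * B"
      using Cauchy_Schwarz_ineq2[of a "?G t x0"] B inv[OF x0]
      by (meson mult_left_mono norm_ge_zero order_trans)
    ultimately show False by linarith
  qed
  have \<beta>0: "\<beta> = 0" using ab by (simp add: \<beta>_def)
  have ax: "axially_symmetric \<Gamma> a c"
    unfolding axially_symmetric_def u_def[symmetric]
  proof (intro allI)
    fix \<theta>
    define t where "t = \<theta> / \<omega>"
    have t\<omega>: "t * \<omega> = \<theta>" "(- t) * \<omega> = - \<theta>" using \<omega>0 by (auto simp: t_def)
    have G\<theta>: "c + rot_axis u \<theta> (x - c) = ?G t x" for x using t\<omega> \<beta>0 by simp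
    show "(\<lambda>x. c + rot_axis u \<theta> (x - c)) ` \<Gamma> = \<Gamma>"
    proof
      show "(\<lambda>x. c + rot_axis u \<theta> (x - c)) ` \<Gamma> \<subseteq> \<Gamma>" 
      proof
        fix y assume "y \<in> (\<lambda>x. c + rot_axis u \<theta> (x - c)) ` \<Gamma>"
        then obtain x where "x \<in> \<Gamma>" "y = c + rot_axis u \<theta> (x - c)" by blast
        then show "y \<in> \<Gamma>" using inv[of x t] G\<theta>[of x] by simp
      qed
      show "\<Gamma> \<subseteq> (\<lambda>x. c + rot_axis u \<theta> (x - c)) ` \<Gamma>"
      proof
        fix y assume y: "y \<in> \<Gamma>"
        have "?G t (?G (- t) y) = y" using Gadd G0 by (metis add.right_inverse)
        moreover have "c + rot_axis u \<theta> (?G (- t) y - c) = ?G t (?G (- t) y)" by (rule G\<theta>)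
        ultimately have "y = c + rot_axis u \<theta> (?G (- t) y - c)" by simp
        then show "y \<in> (\<lambda>x. c + rot_axis u \<theta> (x - c)) ` \<Gamma>" using inv[OF y] by blast
      qed
    qed
  qed
  show ?thesis using a ab ax by (simp add: c_def)
qed

theorem lemmaE1:
  fixes \<Gamma> :: "(real^3) set" and nrm :: "real^3 \<Rightarrow> real^3"
  assumes "closed_C2_surface \<Gamma> nrm"
  shows "(\<forall>a b. (\<lambda>x. cross3 a x + b) \<in> rigid_tangent \<Gamma> nrm \<and> (\<lambda>x. cross3 a x + b) \<noteq> (\<lambda>x. 0) \<longrightarrow>
            a \<noteq> 0 \<and> a \<bullet> b = 0 \<and>
            axially_symmetric \<Gamma> a ((1 / (norm a)^2) *\<^sub>R cross3 a b))
       \<and> (\<forall>a bt. a \<noteq> 0 \<and> axially_symmetric \<Gamma> a bt \<longrightarrow>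
            (\<lambda>x. cross3 a (x - bt)) \<in> rigid_tangent \<Gamma> nrm - {(\<lambda>x. 0)})"
proof (rule conjI; intro allI impI)
  fix a b
  assume h: "(\<lambda>x. cross3 a x + b) \<in> rigid_tangent \<Gamma> nrm \<and> (\<lambda>x. cross3 a x + b) \<noteq> (\<lambda>x. 0)"
  then have tang: "\<forall>x\<in>\<Gamma>. (cross3 a x + b) \<bullet> nrm x = 0" by (simp add: rigid_tangent_def)
  show "a \<noteq> 0 \<and> a \<bullet> b = 0 \<and> axially_symmetric \<Gamma> a ((1 / (norm a)^2) *\<^sub>R cross3 a b)"
    using forward_part[OF assms tang] h by blast
next
  fix a bt
  assume "a \<noteq> 0 \<and> axially_symmetric \<Gamma> a bt"
  then show "(\<lambda>x. cross3 a (x - bt)) \<in> rigid_tangent \<Gamma> nrm - {(\<lambda>x. 0)}"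
    using converse_part[OF assms] by blast
qed

end
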